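(* Let $\phi:\mathbb{R}^{K+J}\times[K+J]\to\mathbb{R}_{\ge 0}$ be such that $\theta\mapsto\phi(\theta,i)$ is continuous on $\mathbb{R}^{K+J}$ for every $i\in[K+J]$, and suppose $\phi$ is symmetric with respect to its last $J$ inputs. Then for every $y\in[K]$ and every $m\in[K]^J$, the map $\theta\mapsto\widetilde{\ell}_\phi(\theta,y,m)$ is continuous on $\mathbb{R}^{K+J}$.
   Context: Fix integers $K\ge 2$ (number of classes) and $J\ge 1$ (number of experts); $[n]=\{1,\dots,n\}$. For a finite index set $I$ and reals $(a_i)_{i\in I}$, $\operatorname{argmax}_{i\in I}a_i$ denotes a single maximizer chosen by a fixed deterministic tie-breaking rule. For $y\in[K]$ and $m=(m_1,\dots,m_J)\in[K]^J$, let $[m=y]=\{j\in[J]: m_j=y\}$. Given a multiclass loss $\phi:\mathbb{R}^{K+J}\times[K+J]\to\mathbb{R}_{\ge0}$, the PiCCE loss is $$\widetilde{\ell}_\phi(\theta,y,m)=\phi(\theta,y)+\phi\Big(\theta,\ \operatorname{argmax}_{j\in[m=y]}\theta_{j+K}+K\Big),\quad \theta\in\mathbb{R}^{K+J},$$ where the second term is defined to be $0$ when $[m=y]=\emptyset$. Write $\boldsymbol{\phi}(\theta)=(\phi(\theta,1),\dots,\phi(\theta,K+J))^\top$. The loss $\phi$ is called symmetric with respect to its last $J$ inputs if $P\boldsymbol{\phi}(\theta)=\boldsymbol{\phi}(P\theta)$ for all $\theta\in\mathbb{R}^{K+J}$ and all $(K+J)\times(K+J)$ permutation matrices $P$ with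 $P_{i,i}=1$ for all $i\in[K]$ (i.e. permutations fixing the first $K$ coordinates). *)

theory Defs
  imports "HOL-Analysis.Analysis"
begin

text \<open>Index set [K+J] is represented by the finite type 'k + 'j:
  Inl k are the K class coordinates, Inr j the J expert coordinates.
  Thus R^(K+J) is real ^ ('k::finite + 'j::finite), with K = CARD('k), J = CARD('j).\<close>

definition argmax_rule :: "('j::finite set \<Rightarrow> ('j \<Rightarrow> real) \<Rightarrow> 'j) \<Rightarrow> bool" where
  "argmax_rule sel \<longleftrightarrow>
     (\<forall>S f. S \<noteq> {} \<longrightarrow> sel S f \<in> S \<and> (\<forall>s\<in>S. f s \<le> f (sel S f)))"

text \<open>Symmetry w.r.t. the last J inputs: for every permutation matrix P fixing the
  first K coordinates, (P phi(theta))_a = phi(theta, pi a) and (P theta)_a = theta_(pi a).\<close>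
definition symmetric_last ::
  "(real ^ ('k::finite + 'j::finite) \<Rightarrow> ('k + 'j) \<Rightarrow> real) \<Rightarrow> bool" where
  "symmetric_last \<phi> \<longleftrightarrow>
     (\<forall>\<pi> \<theta> a. bij \<pi> \<and> (\<forall>k. \<pi> (Inl k) = Inl k) \<longrightarrow>
        \<phi> (\<chi> b. \<theta> $ \<pi> b) a = \<phi> \<theta> (\<pi> a))"

definition picce ::
  "(real ^ ('k::finite + 'j::finite) \<Rightarrow> ('k + 'j) \<Rightarrow> real) \<Rightarrow> ('j set \<Rightarrow> ('j \<Rightarrow> real) \<Rightarrow> 'j) \<Rightarrow>
   real ^ ('k::finite + 'j::finite) \<Rightarrow> 'k \<Rightarrow> ('j \<Rightarrow> 'k) \<Rightarrow> real" where
  "picce \<phi> sel \<theta> y m =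
     \<phi> \<theta> (Inl y) +
     (if {j. m j = y} = {} then 0
      else \<phi> \<theta> (Inr (sel {j. m j = y} (\<lambda>j. \<theta> $ Inr j))))"

end

theory Submission
  imports Defs
begin

lemma sym_eq:
  fixes \<phi> :: "real ^ ('k::finite + 'j::finite) \<Rightarrow> ('k + 'j) \<Rightarrow> real"
  assumes "symmetric_last \<phi>" and "\<theta> $ Inr i = \<theta> $ Inr j"
  shows "\<phi> \<theta> (Inr i) = \<phi> \<theta> (Inr j)"
proof -
  define \<pi> :: "'k + 'j \<Rightarrow> 'k + 'j" where
    "\<pi> = (\<lambda>b. case b of Inl k \<Rightarrow> Inl k | Inr l \<Rightarrow> Inr (if l = i then j else if l = j then i else l))"
  have "\<pi> \<circ> \<pi> = id" unfolding \<pi>_def by (auto simp: fun_eq_iff split: sum.splits)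
  hence b: "bij \<pi>" using o_bij by blast
  have fx: "\<forall>k. \<pi> (Inl k) = Inl k" by (simp add: \<pi>_def)
  have t: "(\<chi> b. \<theta> $ \<pi> b) = \<theta>"
    unfolding vec_eq_iff using assms(2) by (auto simp: \<pi>_def split: sum.splits)
  have "\<phi> (\<chi> b. \<theta> $ \<pi> b) (Inr i) = \<phi> \<theta> (\<pi> (Inr i))"
    using assms(1) b fx unfolding symmetric_last_def by blast
  thus ?thesis using t by (simp add: \<pi>_def)
qed

lemma am1: "argmax_rule sel \<Longrightarrow> S \<noteq> {} \<Longrightarrow> sel S f \<in> S"
  unfolding argmax_rule_def by blast

lemma am2: "argmax_rule sel \<Longrightarrow> S \<noteq> {} \<Longrightarrow> s \<in> S \<Longrightarrow> f s \<le> f (sel S f)"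
  unfolding argmax_rule_def by blast

theorem theorem1:
  fixes \<phi> :: "real ^ ('k::finite + 'j::finite) \<Rightarrow> ('k + 'j) \<Rightarrow> real"
    and sel :: "'j set \<Rightarrow> ('j \<Rightarrow> real) \<Rightarrow> 'j"
    and y :: 'k and m :: "'j \<Rightarrow> 'k"
  assumes "CARD('k) \<ge> 2"
    and "argmax_rule sel"
    and "\<And>\<theta> i. \<phi> \<theta> i \<ge> 0"
    and "\<And>i. continuous_on UNIV (\<lambda>\<theta>. \<phi> \<theta> i)"
    and "symmetric_last \<phi>"
  shows "continuous_on UNIV (\<lambda>\<theta>. picce \<phi> sel \<theta> y m)"
proof -
  define S where "S = {j. m j = y}"
  have c: "\<And>i x. isCont (\<lambda>\<theta>. \<phi> \<theta> i) x"
    using assms(4) by (simp add: continuous_on_eq_continuous_at)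
  have main: "isCont (\<lambda>\<theta>. \<phi> \<theta> (Inr (sel S (\<lambda>j. \<theta> $ Inr j)))) \<theta>0" if ne: "S \<noteq> {}" for \<theta>0
  proof -
    let ?g = "\<lambda>\<theta>. \<phi> \<theta> (Inr (sel S (\<lambda>j. \<theta> $ Inr j)))"
    define j0 where "j0 = sel S (\<lambda>j. \<theta>0 $ Inr j)"
    have j0S: "j0 \<in> S" and j0max: "\<forall>s\<in>S. \<theta>0 $ Inr s \<le> \<theta>0 $ Inr j0"
      using am1[OF assms(2) ne] am2[OF assms(2) ne] unfolding j0_def by auto
    define M where "M = {j\<in>S. \<theta>0 $ Inr j = \<theta>0 $ Inr j0}"
    have gM: "\<phi> \<theta>0 (Inr j) = ?g \<theta>0" if "j \<in> M" for j
    proof -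
      have "\<theta>0 $ Inr j = \<theta>0 $ Inr j0" using that unfolding M_def by simp
      from sym_eq[OF assms(5) this] show ?thesis unfolding j0_def .
    qed
    have ev1: "\<forall>\<^sub>F \<theta> in at \<theta>0. \<forall>j\<in>S - M. \<theta> $ Inr j < \<theta> $ Inr j0"
    proof (rule eventually_ball_finite)
      show "finite (S - M)" by simp
      show "\<forall>j\<in>S - M. \<forall>\<^sub>F \<theta> in at \<theta>0. \<theta> $ Inr j < \<theta> $ Inr j0"
      proof
        fix j assume j: "j \<in> S - M"
        hence jS: "j \<in> S" and jn: "\<theta>0 $ Inr j \<noteq> \<theta>0 $ Inr j0" unfolding M_def by auto
        have lt: "\<theta>0 $ Inr j0 - \<theta>0 $ Inr j > 0" using j0max jS jn by (meson diff_gt_0_iff_gt order_le_neq_trans)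
        have "((\<lambda>\<theta>. \<theta> $ Inr j0 - \<theta> $ Inr j) \<longlongrightarrow> \<theta>0 $ Inr j0 - \<theta>0 $ Inr j) (at \<theta>0)"
          by (intro tendsto_intros tendsto_ident_at)
        from order_tendstoD(1)[OF this lt] show "\<forall>\<^sub>F \<theta> in at \<theta>0. \<theta> $ Inr j < \<theta> $ Inr j0"
          by eventually_elim simp
      qed
    qed
    have ev2: "\<forall>\<^sub>F \<theta> in at \<theta>0. sel S (\<lambda>j. \<theta> $ Inr j) \<in> M"
      using ev1
    proof eventually_elim
      case (elim \<theta>)
      define s where "s = sel S (\<lambda>j. \<theta> $ Inr j)"
      have sS: "s \<in> S" unfolding s_def by (rule am1[OF assms(2) ne])
      have sle: "\<theta> $ Inr j0 \<le> \<theta> $ Inr s" unfolding s_def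
        by (rule am2[OF assms(2) ne j0S, of "\<lambda>j. \<theta> $ Inr j"])
      have "s \<in> M"
      proof (rule ccontr)
        assume "s \<notin> M"
        with sS have "s \<in> S - M" by blast
        with elim have "\<theta> $ Inr s < \<theta> $ Inr j0" by blast
        with sle show False by simp
      qed
      thus ?case unfolding s_def .
    qed
    show ?thesis unfolding isCont_def
    proof (rule tendstoI)
      fix e :: real assume e: "e > 0"
      have "\<forall>\<^sub>F \<theta> in at \<theta>0. \<forall>j\<in>M. dist (\<phi> \<theta> (Inr j)) (\<phi> \<theta>0 (Inr j)) < e"
      proof (rule eventually_ball_finite)
        show "finite M" by simp
        show "\<forall>j\<in>M. \<forall>\<^sub>F \<theta> in at \<theta>0. dist (\<phi> \<theta> (Inr j)) (\<phi> \<theta>0 (Inr j)) < e"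
          using c e unfolding isCont_def by (simp add: tendstoD)
      qed
      with ev2 show "\<forall>\<^sub>F \<theta> in at \<theta>0. dist (?g \<theta>) (?g \<theta>0) < e"
      proof eventually_elim
        case (elim \<theta>)
        then show ?case using gM by metis
      qed
    qed
  qed
  show ?thesis
  proof (cases "S = {}")
    case True
    then show ?thesis unfolding picce_def S_def[symmetric] using assms(4) by simp
  next
    case False
    have "continuous_on UNIV (\<lambda>\<theta>. \<phi> \<theta> (Inl y) + \<phi> \<theta> (Inr (sel S (\<lambda>j. \<theta> $ Inr j))))"
      using c main[OF False] by (simp add: continuous_on_eq_continuous_at continuous_add)
    then show ?thesis unfolding picce_def S_def[symmetric] using False by simp
  qed
qed

end
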